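(* Let $A$ be an arbitrary $C^*$-algebra and $\mathcal M$ a right Hilbert $A$-module. Then every topologically essential closed submodule $\mathcal N$ of $\mathcal M$ is essential.
   Context: A closed submodule $\mathcal N \subset \mathcal M$ is topologically essential if for every nonzero closed submodule $\mathcal K \subset \mathcal M$ one has $\mathcal N \cap \mathcal K \neq \{0\}$. It is essential if for every nonzero (not necessarily closed) submodule $\mathcal K \subset \mathcal M$ (i.e. linear subspace with $\mathcal K A \subset \mathcal K$) one has $\mathcal N \cap \mathcal K \neq \{0\}$. *)

theory Defs
  imports "HOL-Analysis.Analysis"
begin

text \<open>The carrier is a type of class
  real_normed_algebra + banach (a real Banach algebra, possibly without unit),
  equipped with a complex scalar multiplication scA extending scaleR and an
  involution star satisfying the C*-identity.\<close>

definition cstar_algebra ::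
  "(complex \<Rightarrow> 'a::{real_normed_algebra,banach} \<Rightarrow> 'a) \<Rightarrow> ('a \<Rightarrow> 'a) \<Rightarrow> bool" where
  "cstar_algebra scA star \<longleftrightarrow>
     (\<forall>c a b. scA c (a + b) = scA c a + scA c b) \<and>
     (\<forall>c d a. scA (c + d) a = scA c a + scA d a) \<and>
     (\<forall>c d a. scA (c * d) a = scA c (scA d a)) \<and>
     (\<forall>a. scA 1 a = a) \<and>
     (\<forall>r a. scA (complex_of_real r) a = scaleR r a) \<and>
     (\<forall>c a b. scA c (a * b) = scA c a * b) \<and>
     (\<forall>c a b. scA c (a * b) = a * scA c b) \<and>
     (\<forall>c a. norm (scA c a) = cmod c * norm a) \<and>
     (\<forall>a. star (star a) = a) \<and>
     (\<forall>a b. star (a + b) = star a + star b) \<and>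
     (\<forall>c a. star (scA c a) = scA (cnj c) (star a)) \<and>
     (\<forall>a b. star (a * b) = star b * star a) \<and>
     (\<forall>a. norm (star a * a) = (norm a)\<^sup>2)"

definition cstar_positive :: "('a::{real_normed_algebra} \<Rightarrow> 'a) \<Rightarrow> 'a \<Rightarrow> bool" where
  "cstar_positive star a \<longleftrightarrow> (\<exists>b. a = star b * b)"

text \<open>The carrier is a Banach space (type class banach)
  whose norm is the one induced by the A-valued inner product ip (linear in the
  second variable); scM is the complex scalar multiplication, act the right action.\<close>

definition hilbert_module ::
  "(complex \<Rightarrow> 'a::{real_normed_algebra,banach} \<Rightarrow> 'a) \<Rightarrow> ('a \<Rightarrow> 'a) \<Rightarrow>
   (complex \<Rightarrow> 'm::banach \<Rightarrow> 'm) \<Rightarrow> ('m \<Rightarrow> 'a \<Rightarrow> 'm) \<Rightarrow> ('m \<Rightarrow> 'm \<Rightarrow> 'a) \<Rightarrow> bool" where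
  "hilbert_module scA star scM act ip \<longleftrightarrow>
     (\<forall>c x y. scM c (x + y) = scM c x + scM c y) \<and>
     (\<forall>c d x. scM (c + d) x = scM c x + scM d x) \<and>
     (\<forall>c d x. scM (c * d) x = scM c (scM d x)) \<and>
     (\<forall>x. scM 1 x = x) \<and>
     (\<forall>r x. scM (complex_of_real r) x = scaleR r x) \<and>
     (\<forall>x y a. act (x + y) a = act x a + act y a) \<and>
     (\<forall>x a b. act x (a + b) = act x a + act x b) \<and>
     (\<forall>x a b. act x (a * b) = act (act x a) b) \<and>
     (\<forall>c x a. scM c (act x a) = act (scM c x) a) \<and>
     (\<forall>c x a. scM c (act x a) = act x (scA c a)) \<and>
     (\<forall>x y z. ip x (y + z) = ip x y + ip x z) \<and>
     (\<forall>c x y. ip x (scM c y) = scA c (ip x y)) \<and>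
     (\<forall>x y a. ip x (act y a) = ip x y * a) \<and>
     (\<forall>x y. star (ip x y) = ip y x) \<and>
     (\<forall>x. cstar_positive star (ip x x)) \<and>
     (\<forall>x. ip x x = 0 \<longrightarrow> x = 0) \<and>
     (\<forall>x. norm x = sqrt (norm (ip x x)))"

definition submodule ::
  "(complex \<Rightarrow> 'm::banach \<Rightarrow> 'm) \<Rightarrow> ('m \<Rightarrow> 'a \<Rightarrow> 'm) \<Rightarrow> 'm set \<Rightarrow> bool" where
  "submodule scM act K \<longleftrightarrow>
     0 \<in> K \<and> (\<forall>x\<in>K. \<forall>y\<in>K. x + y \<in> K) \<and> (\<forall>c. \<forall>x\<in>K. scM c x \<in> K) \<and>
     (\<forall>x\<in>K. \<forall>a. act x a \<in> K)"

definition closed_submodule ::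
  "(complex \<Rightarrow> 'm::banach \<Rightarrow> 'm) \<Rightarrow> ('m \<Rightarrow> 'a \<Rightarrow> 'm) \<Rightarrow> 'm set \<Rightarrow> bool" where
  "closed_submodule scM act K \<longleftrightarrow> submodule scM act K \<and> closed K"

definition topologically_essential ::
  "(complex \<Rightarrow> 'm::banach \<Rightarrow> 'm) \<Rightarrow> ('m \<Rightarrow> 'a \<Rightarrow> 'm) \<Rightarrow> 'm set \<Rightarrow> bool" where
  "topologically_essential scM act N \<longleftrightarrow> closed_submodule scM act N \<and>
     (\<forall>K. closed_submodule scM act K \<and> K \<noteq> {0} \<longrightarrow> N \<inter> K \<noteq> {0})"

definition essential ::
  "(complex \<Rightarrow> 'm::banach \<Rightarrow> 'm) \<Rightarrow> ('m \<Rightarrow> 'a \<Rightarrow> 'm) \<Rightarrow> 'm set \<Rightarrow> bool" where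
  "essential scM act N \<longleftrightarrow> closed_submodule scM act N \<and>
     (\<forall>K. submodule scM act K \<and> K \<noteq> {0} \<longrightarrow> N \<inter> K \<noteq> {0})"

end

theory Submission
  imports Defs "HOL-Complex_Analysis.Complex_Analysis"
begin

locale cstar =
  fixes scA :: "complex \<Rightarrow> 'a::{real_normed_algebra,banach} \<Rightarrow> 'a" and star :: "'a \<Rightarrow> 'a"
  assumes cs: "cstar_algebra scA star"
begin

lemma scA_add: "scA c (a + b) = scA c a + scA c b" using cs by (simp add: cstar_algebra_def)
lemma scA_addc: "scA (c + d) a = scA c a + scA d a" using cs by (simp add: cstar_algebra_def)
lemma scA_mult: "scA (c * d) a = scA c (scA d a)" using cs by (simp add: cstar_algebra_def)
lemma scA_one: "scA 1 a = a" using cs by (simp add: cstar_algebra_def)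
lemma scA_real: "scA (complex_of_real r) a = r *\<^sub>R a" using cs by (simp add: cstar_algebra_def)
lemma scA_left: "scA c (a * b) = scA c a * b" using cs by (simp add: cstar_algebra_def)
lemma scA_right: "scA c (a * b) = a * scA c b" using cs unfolding cstar_algebra_def by metis
lemma norm_scA: "norm (scA c a) = cmod c * norm a" using cs by (simp add: cstar_algebra_def)
lemma star_star[simp]: "star (star a) = a" using cs by (simp add: cstar_algebra_def)
lemma star_add: "star (a + b) = star a + star b" using cs by (simp add: cstar_algebra_def)
lemma star_scA: "star (scA c a) = scA (cnj c) (star a)" using cs by (simp add: cstar_algebra_def)
lemma star_mult: "star (a * b) = star b * star a" using cs by (simp add: cstar_algebra_def)
lemma cstar_id: "norm (star a * a) = (norm a)\<^sup>2" using cs by (simp add: cstar_algebra_def)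

lemma star_scaleR: "star (r *\<^sub>R a) = r *\<^sub>R star a"
  by (metis scA_real star_scA complex_cnj_complex_of_real)

lemma star_zero[simp]: "star 0 = 0"
  by (metis scaleR_zero_left star_scaleR)

lemma star_minus: "star (- a) = - star a"
  by (metis scaleR_minus1_left star_scaleR)

lemma star_diff: "star (a - b) = star a - star b"
  by (metis diff_conv_add_uminus star_add star_minus)

lemma norm_star_le: "norm a \<le> norm (star a)"
proof (cases "a = 0")
  case True then show ?thesis by simp
next
  case False
  have "(norm a)\<^sup>2 \<le> norm (star a) * norm a" using cstar_id[of a] norm_mult_ineq[of "star a" a] by simp
  then show ?thesis using False by (simp add: power2_eq_square)
qed

lemma norm_star[simp]: "norm (star a) = norm a"
  using norm_star_le[of a] norm_star_le[of "star a"] by simp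

lemma cstar_id2: "norm (a * star a) = (norm a)\<^sup>2"
  using cstar_id[of "star a"] by simp

lemma bl_star: "bounded_linear star"
  by (rule bounded_linear_intro[where K=1]) (auto simp: star_add star_scaleR)

lemma scA_zero[simp]: "scA c 0 = 0"
  by (metis add_cancel_right_right scA_add)

lemma scA_minus1: "scA (-1) a = - a"
  by (metis scA_real of_real_1 of_real_minus scaleR_minus1_left)

lemma scA_ii: "scA \<i> (scA \<i> a) = - a"
  by (metis scA_mult complex_i_mult_minus mult_1_right scA_minus1 mult.commute)

lemma scA_uminus: "scA (- c) a = - scA c a"
  by (metis mult_minus1 scA_minus1 scA_mult)

lemma scA_diff: "scA c (a - b) = scA c a - scA c b"
  by (metis add_diff_cancel scA_add diff_add_cancel eq_diff_eq)

lemma scA_neg: "scA c (- a) = - scA c a"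
  by (metis diff_0 scA_diff scA_zero)

lemma scA_scaleR: "scA c (r *\<^sub>R a) = r *\<^sub>R scA c a"
  by (metis scA_mult scA_real mult.commute)

end

fun kpow :: "'a::real_normed_algebra \<Rightarrow> nat \<Rightarrow> 'a \<Rightarrow> 'a" where
  "kpow k 0 c = c" | "kpow k (Suc i) c = k * kpow k i c"

definition ev :: "'a::real_normed_algebra \<Rightarrow> real poly \<Rightarrow> 'a \<Rightarrow> 'a" where
  "ev k q c = (\<Sum>i\<le>degree q. coeff q i *\<^sub>R kpow k i c)"

lemma ev_le: "degree q \<le> n \<Longrightarrow> ev k q c = (\<Sum>i\<le>n. coeff q i *\<^sub>R kpow k i c)"
  unfolding ev_def
  by (rule sum.mono_neutral_left) (auto simp: coeff_eq_0)

lemma kpow_comm: "kpow k i (k * c) = k * kpow k i c"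
  by (induction i) auto

lemma kpow_rmult: "kpow k i (c * d) = kpow k i c * d"
  by (induction i) (auto simp: mult.assoc)

lemma kpow_add: "kpow k i (c + d) = kpow k i c + kpow k i d"
  by (induction i) (auto simp: distrib_left)

lemma kpow_scaleR: "kpow k i (r *\<^sub>R c) = r *\<^sub>R kpow k i c"
  by (induction i) auto

lemma kpow_diff: "kpow k i (c - d) = kpow k i c - kpow k i d"
  by (induction i) (auto simp: right_diff_distrib)

lemma kpow_zero[simp]: "kpow k i 0 = 0"
  by (induction i) auto

lemma ev_pCons: "ev k (pCons a q) c = a *\<^sub>R c + k * ev k q c"
proof -
  let ?n = "degree q"
  have "ev k (pCons a q) c = (\<Sum>i\<le>Suc ?n. coeff (pCons a q) i *\<^sub>R kpow k i c)"
    by (rule ev_le) (simp add: degree_pCons_le)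
  also have "\<dots> = a *\<^sub>R c + (\<Sum>i\<le>?n. coeff q i *\<^sub>R kpow k (Suc i) c)"
    by (subst sum.atMost_Suc_shift) simp
  also have "(\<Sum>i\<le>?n. coeff q i *\<^sub>R kpow k (Suc i) c) = k * ev k q c"
    by (simp add: ev_def sum_distrib_left mult_scaleR_right)
  finally show ?thesis .
qed

lemma ev_0[simp]: "ev k 0 c = 0" by (simp add: ev_def)

lemma ev_add: "ev k (p + q) c = ev k p c + ev k q c"
proof -
  let ?n = "max (degree p) (degree q)"
  have "ev k (p + q) c = (\<Sum>i\<le>?n. coeff (p+q) i *\<^sub>R kpow k i c)"
    by (rule ev_le) (simp add: degree_add_le)
  also have "\<dots> = (\<Sum>i\<le>?n. coeff p i *\<^sub>R kpow k i c) + (\<Sum>i\<le>?n. coeff q i *\<^sub>R kpow k i c)"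
    by (simp add: scaleR_add_left sum.distrib)
  also have "\<dots> = ev k p c + ev k q c"
    by (simp add: ev_le[of p ?n] ev_le[of q ?n])
  finally show ?thesis .
qed

lemma ev_smult: "ev k (smult r p) c = r *\<^sub>R ev k p c"
proof -
  have "ev k (smult r p) c = (\<Sum>i\<le>degree p. coeff (smult r p) i *\<^sub>R kpow k i c)"
    by (rule ev_le) (simp add: degree_smult_le)
  then show ?thesis by (simp add: ev_def scaleR_sum_right)
qed

lemma ev_minus: "ev k (- p) c = - ev k p c"
  using ev_smult[of k "-1" p c] by simp

lemma ev_diff: "ev k (p - q) c = ev k p c - ev k q c"
  using ev_add[of k p "-q" c] ev_minus[of k q c] by simp

lemma ev_const[simp]: "ev k [:a:] c = a *\<^sub>R c"
  by (simp add: ev_def)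

lemma ev_one[simp]: "ev k 1 c = c"
  by (simp add: ev_def)

lemma ev_cadd: "ev k q (c + d) = ev k q c + ev k q d"
  by (simp add: ev_def kpow_add scaleR_add_right sum.distrib)

lemma ev_cscale: "ev k q (r *\<^sub>R c) = r *\<^sub>R ev k q c"
  by (simp add: ev_def kpow_scaleR scaleR_sum_right mult.commute)

lemma ev_cdiff: "ev k q (c - d) = ev k q c - ev k q d"
  by (simp add: ev_def kpow_diff scaleR_diff_right sum_subtractf)

lemma ev_czero[simp]: "ev k q 0 = 0"
  by (simp add: ev_def)

lemma ev_comm: "ev k q (k * c) = k * ev k q c"
  by (simp add: ev_def kpow_comm sum_distrib_left mult_scaleR_right)

lemma ev_rmult: "ev k q (c * d) = ev k q c * d"
  by (simp add: ev_def kpow_rmult sum_distrib_right)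

lemma ev_mult: "ev k (p * q) c = ev k p (ev k q c)"
proof (induction p)
  case 0 then show ?case by simp
next
  case (pCons a p)
  have "pCons a p * q = smult a q + pCons 0 (p * q)" by simp
  then show ?case
    by (simp add: ev_add ev_smult ev_pCons pCons ev_cadd ev_cscale ev_comm)
qed

lemma ev_pCons0: "ev k (pCons 0 p) c = ev k p k * c"
  by (simp add: ev_pCons ev_comm[symmetric] ev_rmult[symmetric])

context cstar
begin

lemma scA_sum: "scA z (sum f S) = sum (\<lambda>i. scA z (f i)) S"
  by (induction S rule: infinite_finite_induct) (auto simp: scA_add)

lemma kpow_scA: "kpow k i (scA z c) = scA z (kpow k i c)"
  by (induction i) (auto simp: scA_right)

lemma ev_scA: "ev k q (scA z c) = scA z (ev k q c)"
  by (simp add: ev_def kpow_scA scA_scaleR scA_sum)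

lemma star_sum: "star (sum f S) = sum (\<lambda>i. star (f i)) S"
  by (induction S rule: infinite_finite_induct) (auto simp: star_add)

lemma star_kpow: "star k = k \<Longrightarrow> star (kpow k i k) = kpow k i k"
proof (induction i)
  case (Suc i)
  have "star (kpow k (Suc i) k) = kpow k i k * k" using Suc by (simp add: star_mult)
  also have "\<dots> = kpow k i (k * k)" by (simp add: kpow_rmult)
  also have "\<dots> = kpow k (Suc i) k" by (simp add: kpow_comm)
  finally show ?case .
qed simp

lemma star_ev: "star k = k \<Longrightarrow> star (ev k q k) = ev k q k"
  by (simp add: ev_def star_sum star_scaleR star_kpow)

end

definition beta :: "nat \<Rightarrow> real" where "beta n = ((1/2::real) gchoose n) * (-1)^n"

lemma gch_half_le: "\<bar>(1/2::real) gchoose n\<bar> \<le> 1"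
proof (induction n)
  case 0 then show ?case by simp
next
  case (Suc n)
  have rec: "real (Suc n) * ((1/2::real) gchoose Suc n) = (1/2 - real n) * ((1/2::real) gchoose n)"
    using gbinomial_mult_1[of "1/2::real" n] by (simp add: algebra_simps)
  have "\<bar>1/2 - real n\<bar> \<le> real (Suc n)" by simp
  have "real (Suc n) * \<bar>(1/2::real) gchoose Suc n\<bar> = \<bar>1/2 - real n\<bar> * \<bar>(1/2::real) gchoose n\<bar>"
    using arg_cong[OF rec, of abs] by (simp add: abs_mult)
  also have "\<dots> \<le> real (Suc n) * 1"
    by (rule mult_mono) (use Suc \<open>\<bar>1/2 - real n\<bar> \<le> real (Suc n)\<close> in auto)
  finally show ?case by simp
qed

lemma beta_le: "\<bar>beta n\<bar> \<le> 1"
  using gch_half_le[of n] by (simp add: beta_def abs_mult)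

lemma beta_conv: "(\<Sum>i\<le>n. beta i * beta (n - i)) = (-1)^n * (1 gchoose n)"
proof -
  have "(\<Sum>i\<le>n. beta i * beta (n - i)) = (\<Sum>i\<le>n. (-1)^n * (((1/2::real) gchoose i) * ((1/2) gchoose (n - i))))"
    by (rule sum.cong) (auto simp: beta_def power_add[symmetric])
  also have "\<dots> = (-1)^n * (\<Sum>i\<in>{0..n}. ((1/2::real) gchoose i) * ((1/2) gchoose (n - i)))"
    by (simp add: sum_distrib_left atLeast0AtMost)
  also have "\<dots> = (-1)^n * (1 gchoose n)"
    by (subst gbinomial_Vandermonde) simp
  finally show ?thesis .
qed

lemma beta_conv2: "n \<ge> 2 \<Longrightarrow> (\<Sum>i\<le>n. beta i * beta (n - i)) = 0"
proof -
  assume "n \<ge> 2"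
  have "(1::real) gchoose n = of_nat (1 choose n)"
    by (simp add: binomial_gbinomial)
  also have "\<dots> = 0" using \<open>n \<ge> 2\<close> by simp
  finally show ?thesis by (simp add: beta_conv)
qed

lemma beta0[simp]: "beta 0 = 1" by (simp add: beta_def)
lemma beta1[simp]: "beta 1 = -1/2" by (simp add: beta_def)
lemma beta_Suc0[simp]: "beta (Suc 0) = -1/2" by (simp add: beta_def)

lemma kpow_kpow: "kpow k a (kpow k b c) = kpow k (a + b) c"
  by (induction a) auto

lemma kpow_mult: "kpow k a k * kpow k b k = kpow k (a + b + 1) k"
proof -
  have "kpow k a k * kpow k b k = kpow k a (k * kpow k b k)"
    by (simp add: kpow_rmult[symmetric] kpow_comm)
  also have "\<dots> = kpow k a (kpow k (Suc b) k)" by simp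
  also have "\<dots> = kpow k (a + b + 1) k"
    using kpow_kpow[of k a "Suc b" k] by simp
  finally show ?thesis .
qed

lemma norm_kpow: "norm (kpow k j c) \<le> norm k ^ j * norm c"
proof (induction j)
  case (Suc j)
  have "norm (k * kpow k j c) \<le> norm k * norm (kpow k j c)" by (rule norm_mult_ineq)
  also have "\<dots> \<le> norm k * (norm k ^ j * norm c)" using Suc by (simp add: mult_left_mono)
  finally show ?case by (simp add: mult.assoc)
qed simp

locale cstar_k = cstar +
  fixes k
  assumes sa: "star k = k" and nk: "norm k \<le> 1/2"
begin

definition sterm :: "nat \<Rightarrow> 'a" where
  "sterm n = (if n = 0 then 0 else beta n *\<^sub>R kpow k (2*n - 1) k)"

definition sq :: 'a where "sq = suminf sterm"

lemma norm_sterm: "norm (sterm n) \<le> (1/4)^n"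
proof (cases "n = 0")
  case True then show ?thesis by (simp add: sterm_def)
next
  case False
  have "norm (sterm n) = \<bar>beta n\<bar> * norm (kpow k (2*n-1) k)" using False by (simp add: sterm_def)
  also have "\<dots> \<le> 1 * (norm k ^ (2*n-1) * norm k)"
    by (rule mult_mono) (auto simp: beta_le norm_kpow)
  also have "\<dots> = norm k ^ (2*n)"
  proof -
    have "Suc (2*n-1) = 2*n" using False by simp
    then show ?thesis by (simp only: mult_1 power_Suc2[symmetric])
  qed
  also have "\<dots> \<le> (1/2) ^ (2*n)" by (rule power_mono) (use nk in auto)
  also have "\<dots> = (1/4)^n" by (simp add: power_mult power2_eq_square)
  finally show ?thesis .
qed

lemma summable_sterm: "summable (\<lambda>n. norm (sterm n))"
  by (rule summable_comparison_test[where g="\<lambda>n. (1/4::real)^n"]) (auto simp: norm_sterm)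

lemma summable_sterm': "summable sterm"
  using summable_sterm summable_norm_cancel by blast

lemma sterm_prod: "sterm i * sterm (n - i) =
   (if i = 0 \<or> i \<ge> n then 0 else (beta i * beta (n - i)) *\<^sub>R kpow k (2*n - 1) k)"
proof (cases "i = 0 \<or> i \<ge> n")
  case True then show ?thesis by (auto simp: sterm_def)
next
  case False
  then have ar: "(2*i - 1) + (2*(n-i) - 1) + 1 = 2*n - 1" by auto
  have "sterm i * sterm (n - i) = (beta i *\<^sub>R kpow k (2*i - 1) k) * (beta (n-i) *\<^sub>R kpow k (2*(n-i) - 1) k)"
    using False by (simp add: sterm_def)
  also have "\<dots> = (beta i * beta (n - i)) *\<^sub>R (kpow k (2*i - 1) k * kpow k (2*(n-i) - 1) k)"
    by simp
  also have "\<dots> = (beta i * beta (n - i)) *\<^sub>R kpow k (2*n - 1) k"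
    by (simp only: kpow_mult ar)
  finally show ?thesis using False by simp
qed

lemma cauchy_term: "(\<Sum>i\<le>n. sterm i * sterm (n - i)) + 2 *\<^sub>R sterm n = (if n = 1 then - (k * k) else 0)"
proof -
  have A: "(\<Sum>i\<le>n. sterm i * sterm (n - i)) = (\<Sum>i\<le>n. (if i = 0 \<or> i \<ge> n then 0 else beta i * beta (n - i))) *\<^sub>R kpow k (2*n - 1) k"
    by (simp add: scaleR_sum_left, rule sum.cong) (auto simp: sterm_prod)
  show ?thesis
  proof (cases "n \<ge> 2")
    case True
    have "(\<Sum>i\<le>n. (if i = 0 \<or> i \<ge> n then 0 else beta i * beta (n - i))) = (\<Sum>i\<le>n. beta i * beta (n - i)) - beta 0 * beta n - beta n * beta 0"
    proof -
      have "(\<Sum>i\<le>n. beta i * beta (n - i)) = (\<Sum>i\<le>n. (if i = 0 \<or> i \<ge> n then 0 else beta i * beta (n - i))) + (\<Sum>i\<le>n. (if i = 0 \<or> i \<ge> n then beta i * beta (n - i) else 0))"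
        by (subst sum.distrib[symmetric]) (rule sum.cong, auto)
      moreover have "(\<Sum>i\<le>n. (if i = 0 \<or> i \<ge> n then beta i * beta (n - i) else 0)) = (\<Sum>i\<in>{0, n}. beta i * beta (n - i))"
        using True by (intro sum.mono_neutral_cong_right) auto
      ultimately show ?thesis using True by simp
    qed
    also have "\<dots> = - 2 * beta n" using beta_conv2[OF True] by simp
    finally have S: "(\<Sum>i\<le>n. (if i = 0 \<or> i \<ge> n then 0 else beta i * beta (n - i))) = - 2 * beta n" .
    show ?thesis using True by (simp only: A S) (simp add: sterm_def algebra_simps)
  next
    case False
    then consider "n = 0" | "n = 1" by linarith
    then show ?thesis
    proof cases
      case 1 then show ?thesis by (simp add: A sterm_def)
    next
      case 2 then show ?thesis by (simp add: A sterm_def)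
    qed
  qed
qed

lemma sq_eq: "sq * sq + 2 *\<^sub>R sq = - (k * k)"
proof -
  have "(\<lambda>n. \<Sum>i\<le>n. sterm i * sterm (n - i)) sums (sq * sq)"
    unfolding sq_def by (rule Cauchy_product_sums[OF summable_sterm summable_sterm])
  moreover have "(\<lambda>n. 2 *\<^sub>R sterm n) sums (2 *\<^sub>R sq)"
    unfolding sq_def by (intro sums_scaleR_right summable_sums summable_sterm')
  ultimately have "(\<lambda>n. (\<Sum>i\<le>n. sterm i * sterm (n - i)) + 2 *\<^sub>R sterm n) sums (sq * sq + 2 *\<^sub>R sq)"
    by (rule sums_add)
  moreover have "(\<lambda>n. (\<Sum>i\<le>n. sterm i * sterm (n - i)) + 2 *\<^sub>R sterm n) sums (- (k * k))"
    unfolding cauchy_term using sums_single[of 1 "\<lambda>_. - (k*k)"] by simp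
  ultimately show ?thesis using sums_unique2 by blast
qed

lemma kpow_k_comm: "kpow k j k * k = k * kpow k j k"
  by (simp add: kpow_rmult[symmetric] kpow_comm)

lemma sq_comm: "k * sq = sq * k"
proof -
  have "k * sq = (\<Sum>n. k * sterm n)" unfolding sq_def by (rule suminf_mult[symmetric, OF summable_sterm'])
  also have "\<dots> = (\<Sum>n. sterm n * k)"
    by (rule arg_cong[where f=suminf], rule ext) (simp add: sterm_def kpow_k_comm)
  also have "\<dots> = sq * k" unfolding sq_def by (rule suminf_mult2[symmetric, OF summable_sterm'])
  finally show ?thesis .
qed

lemma sq_star: "star sq = sq"
proof -
  have "star sq = (\<Sum>n. star (sterm n))" unfolding sq_def
    by (rule bounded_linear.suminf[OF bl_star summable_sterm'])
  also have "\<dots> = sq" unfolding sq_def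
    by (rule arg_cong[where f=suminf], rule ext) (simp add: sterm_def star_scaleR star_kpow sa)
  finally show ?thesis .
qed

definition Z :: "'a \<Rightarrow> 'a" where "Z c = k * c + scA \<i> (c + sq * c)"
definition W :: "'a \<Rightarrow> 'a" where "W c = k * c - scA \<i> (c + sq * c)"

lemma ZW_sum: "Z c + W c = 2 *\<^sub>R (k * c)"
  by (simp add: Z_def W_def scaleR_2)

lemma key0: "c + (k * k + 2 *\<^sub>R sq + sq * sq) * c = c"
  using sq_eq by (simp add: algebra_simps)

lemma WZ: "W (Z c) = c"
proof -
  let ?d = "c + sq * c"
  have e1: "k * scA \<i> ?d = scA \<i> (k * c + k * (sq * c))" by (simp add: scA_right[symmetric] distrib_left)
  have e2: "sq * scA \<i> ?d = scA \<i> (sq * c + sq * (sq * c))" by (simp add: scA_right[symmetric] distrib_left)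
  have e3: "sq * (k * c) = k * (sq * c)" by (simp add: mult.assoc[symmetric] sq_comm)
  have "W (Z c) = k * (k * c) + k * scA \<i> ?d - scA \<i> (k * c + scA \<i> ?d + sq * (k * c) + sq * scA \<i> ?d)"
    by (simp add: Z_def W_def distrib_left add.assoc)
  also have "\<dots> = k * (k * c) + scA \<i> (k * c + k * (sq * c)) - scA \<i> (k * c + k * (sq * c)) - scA \<i> (scA \<i> ?d) - scA \<i> (scA \<i> (sq * c + sq * (sq * c)))"
    by (simp add: e3 scA_add scA_diff scA_right[symmetric] algebra_simps)
  also have "\<dots> = k * (k * c) + ?d + (sq * c + sq * (sq * c))"
    by (simp add: scA_ii)
  also have "\<dots> = c + (k * k + 2 *\<^sub>R sq + sq * sq) * c"
    by (simp add: algebra_simps scaleR_2)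
  also have "\<dots> = c" by (rule key0)
  finally show ?thesis .
qed

lemma ZW: "Z (W c) = c"
proof -
  let ?d = "c + sq * c"
  have e1: "k * scA \<i> ?d = scA \<i> (k * c + k * (sq * c))" by (simp add: scA_right[symmetric] distrib_left)
  have e2: "sq * scA \<i> ?d = scA \<i> (sq * c + sq * (sq * c))" by (simp add: scA_right[symmetric] distrib_left)
  have e3: "sq * (k * c) = k * (sq * c)" by (simp add: mult.assoc[symmetric] sq_comm)
  have "Z (W c) = k * (k * c) - k * scA \<i> ?d + scA \<i> (k * c - scA \<i> ?d + sq * (k * c) - sq * scA \<i> ?d)"
    by (simp add: Z_def W_def right_diff_distrib algebra_simps)
  also have "\<dots> = k * (k * c) - scA \<i> (k * c + k * (sq * c)) + scA \<i> (k * c + k * (sq * c)) - scA \<i> (scA \<i> ?d) - scA \<i> (scA \<i> (sq * c + sq * (sq * c)))"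
    by (simp add: e3 scA_add scA_diff scA_right[symmetric] algebra_simps)
  also have "\<dots> = k * (k * c) + ?d + (sq * c + sq * (sq * c))"
    by (simp add: scA_ii)
  also have "\<dots> = c + (k * k + 2 *\<^sub>R sq + sq * sq) * c"
    by (simp add: algebra_simps scaleR_2)
  also have "\<dots> = c" by (rule key0)
  finally show ?thesis .
qed

end

fun cheb :: "nat \<Rightarrow> real poly" where
  "cheb 0 = 1"
| "cheb (Suc 0) = [:0,1:]"
| "cheb (Suc (Suc n)) = [:0,2:] * cheb (Suc n) - cheb n"

lemma ev_x2: "ev k ([:0,2:] * p) c = 2 *\<^sub>R (k * ev k p c)"
  by (simp add: ev_pCons ev_smult)

context cstar_k
begin

lemma star_Z: "star (Z c) * y = star c * W y"
  unfolding Z_def W_def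
  by (simp add: star_add star_mult star_scA sa sq_star distrib_right distrib_left
      scA_left[symmetric] scA_right[symmetric] scA_uminus scA_add scA_diff mult.assoc algebra_simps)

lemma star_W: "star (W c) * y = star c * Z y"
  unfolding Z_def W_def
  by (simp add: star_diff star_add star_mult star_scA sa sq_star distrib_right distrib_left
      left_diff_distrib right_diff_distrib
      scA_left[symmetric] scA_right[symmetric] scA_uminus scA_add scA_diff mult.assoc algebra_simps)

lemma norm_Z: "norm (Z c) = norm c"
proof -
  have "(norm (Z c))\<^sup>2 = (norm c)\<^sup>2"
    by (simp add: cstar_id[symmetric] star_Z WZ)
  then show ?thesis by (simp add: power2_eq_iff_nonneg)
qed

lemma norm_W: "norm (W c) = norm c"
proof -
  have "(norm (W c))\<^sup>2 = (norm c)\<^sup>2"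
    by (simp add: cstar_id[symmetric] star_W ZW)
  then show ?thesis by (simp add: power2_eq_iff_nonneg)
qed

lemma norm_Zpow: "norm ((Z ^^ j) c) = norm c"
  by (induction j) (auto simp: norm_Z)

lemma norm_Wpow: "norm ((W ^^ j) c) = norm c"
  by (induction j) (auto simp: norm_W)

lemma ev_cheb: "2 *\<^sub>R ev k (cheb j) c = (Z ^^ j) c + (W ^^ j) c"
proof (induction j rule: cheb.induct)
  case 1 then show ?case by (simp add: scaleR_2)
next
  case 2 then show ?case using ZW_sum[of c] by (simp add: ev_pCons)
next
  case (3 n)
  let ?a = "(Z ^^ Suc n) c" and ?b = "(W ^^ Suc n) c"
  have z: "(Z ^^ Suc (Suc n)) c = 2 *\<^sub>R (k * ?a) - (Z ^^ n) c"
  proof -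
    have "(Z ^^ Suc (Suc n)) c = Z ?a" by simp
    also have "\<dots> = 2 *\<^sub>R (k * ?a) - W ?a" using ZW_sum[of ?a] by (simp add: algebra_simps)
    also have "W ?a = (Z ^^ n) c" by (simp add: WZ)
    finally show ?thesis .
  qed
  have w: "(W ^^ Suc (Suc n)) c = 2 *\<^sub>R (k * ?b) - (W ^^ n) c"
  proof -
    have "(W ^^ Suc (Suc n)) c = W ?b" by simp
    also have "\<dots> = 2 *\<^sub>R (k * ?b) - Z ?b" using ZW_sum[of ?b] by (simp add: algebra_simps)
    also have "Z ?b = (W ^^ n) c" by (simp add: ZW)
    finally show ?thesis .
  qed
  have "2 *\<^sub>R ev k (cheb (Suc (Suc n))) c = 2 *\<^sub>R (k * (2 *\<^sub>R ev k (cheb (Suc n)) c)) - 2 *\<^sub>R ev k (cheb n) c"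
    by (simp add: ev_diff ev_pCons ev_smult scaleR_diff_right)
  also have "\<dots> = 2 *\<^sub>R (k * (?a + ?b)) - ((Z ^^ n) c + (W ^^ n) c)"
    using 3 by simp
  also have "\<dots> = (Z ^^ Suc (Suc n)) c + (W ^^ Suc (Suc n)) c"
    unfolding z w by (simp add: distrib_left scaleR_add_right algebra_simps)
  finally show ?case .
qed

lemma norm_ev_cheb: "norm (ev k (cheb j) c) \<le> norm c"
proof -
  have "2 * norm (ev k (cheb j) c) = norm ((Z ^^ j) c + (W ^^ j) c)"
    using arg_cong[OF ev_cheb[of j c], of norm] by simp
  also have "\<dots> \<le> norm c + norm c"
    using norm_triangle_ineq[of "(Z ^^ j) c" "(W ^^ j) c"] by (simp add: norm_Zpow norm_Wpow)
  finally show ?thesis by simp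
qed

end

lemma cheb_deg: "degree (cheb n) \<le> n \<and> coeff (cheb n) n = (if n = 0 then 1 else 2^(n-1))"
proof (induction n rule: cheb.induct)
  case 1 then show ?case by simp
next
  case 2 then show ?case by simp
next
  case (3 n)
  have d1: "degree ([:0,2:] * cheb (Suc n)) \<le> Suc (Suc n)"
    using 3 degree_mult_le[of "[:0,2:]" "cheb (Suc n)"] by simp
  have d2: "degree (cheb n) \<le> Suc (Suc n)" using 3 by simp
  have deg: "degree (cheb (Suc (Suc n))) \<le> Suc (Suc n)"
    using degree_diff_le[OF d1 d2] by simp
  have c0: "coeff (cheb n) (Suc (Suc n)) = 0" using 3 by (simp add: coeff_eq_0)
  have "coeff (cheb (Suc (Suc n))) (Suc (Suc n)) = 2 * coeff (cheb (Suc n)) (Suc n)"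
    using c0 by simp
  then show ?case using deg 3 by simp
qed

lemma cheb_lead_nz: "coeff (cheb n) n \<noteq> 0"
  using cheb_deg[of n] by simp

lemma degree_le_pred: "degree p \<le> Suc m \<Longrightarrow> coeff p (Suc m) = 0 \<Longrightarrow> degree p \<le> m"
  by (metis le_SucE leading_coeff_0_iff degree_0 le0 order.refl)

lemma cheb_expansion: "degree q \<le> m \<Longrightarrow> \<exists>c. q = (\<Sum>j\<le>m. smult (c j) (cheb j))"
proof (induction m arbitrary: q)
  case 0
  then have "q = [:coeff q 0:]" by (metis degree_0_id le_zero_eq)
  then have "q = smult (coeff q 0) (cheb 0)" by simp
  then show ?case by auto
next
  case (Suc m)
  define a where "a = coeff q (Suc m) / coeff (cheb (Suc m)) (Suc m)"
  define q' where "q' = q - smult a (cheb (Suc m))"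
  have "degree (smult a (cheb (Suc m))) \<le> Suc m" using cheb_deg[of "Suc m"] by (simp add: degree_smult_le order_trans[OF degree_smult_le])
  then have "degree q' \<le> Suc m" unfolding q'_def using Suc.prems degree_diff_le by blast
  moreover have "coeff q' (Suc m) = 0" unfolding q'_def a_def using cheb_lead_nz[of "Suc m"] by simp
  ultimately have "degree q' \<le> m" by (rule degree_le_pred)
  then obtain c where c: "q' = (\<Sum>j\<le>m. smult (c j) (cheb j))" using Suc.IH by blast
  have "q = q' + smult a (cheb (Suc m))" unfolding q'_def by simp
  also have "\<dots> = (\<Sum>j\<le>Suc m. smult ((c(Suc m := a)) j) (cheb j))"
    by (simp add: c)
  finally show ?case by blast
qed

lemma cheb_circle: "norm w = 1 \<Longrightarrow> poly (cheb j) (Re w) = Re (w ^ j)"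
proof (induction j rule: cheb.induct)
  case 1 then show ?case by simp
next
  case 2 then show ?case by simp
next
  case (3 n)
  have u: "cnj w * w = 1" using 3(3) complex_norm_square[of w] by (simp add: mult.commute)
  define z where "z = w ^ Suc n"
  have a: "w ^ n = cnj w * z" using u by (simp add: z_def mult.assoc[symmetric])
  have b: "w ^ Suc (Suc n) = w * z" by (simp add: z_def)
  have "Re (w * z) + Re (cnj w * z) = 2 * Re w * Re z" by simp
  then have r: "Re (w ^ Suc (Suc n)) = 2 * Re w * Re (w ^ Suc n) - Re (w ^ n)"
    unfolding a b z_def by simp
  have IH1: "poly (cheb (Suc n)) (Re w) = Re (w ^ Suc n)" using 3(1) 3(3) by blast
  have IH2: "poly (cheb n) (Re w) = Re (w ^ n)" using 3(2) 3(3) by blast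
  have e: "poly (cheb (Suc (Suc n))) (Re w) = 2 * Re w * poly (cheb (Suc n)) (Re w) - poly (cheb n) (Re w)"
    by simp
  show ?case by (simp only: e IH1 IH2 r)
qed

lemma deriv_poly_fun: "deriv (poly p) = poly (pderiv p)"
  by (rule ext, rule DERIV_imp_deriv, rule poly_DERIV)

lemma higher_deriv_poly: "(deriv ^^ n) (poly p) = poly ((pderiv ^^ n) p)"
  by (induction n) (auto simp: deriv_poly_fun)

lemma coeff_bound_complex:
  fixes P :: "complex poly"
  assumes "\<And>w. norm w = 1 \<Longrightarrow> norm (poly P w) \<le> M"
  shows "norm (coeff P n) \<le> M"
proof -
  have "norm ((deriv ^^ n) (poly P) 0) \<le> fact n * M / 1 ^ n"
    by (rule Cauchy_inequality) (auto intro!: holomorphic_intros continuous_intros simp: assms)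
  moreover have "(deriv ^^ n) (poly P) 0 = fact n * coeff P n"
    by (simp add: higher_deriv_poly poly_0_coeff_0 coeff_higher_pderiv pochhammer_fact)
  ultimately have "fact n * norm (coeff P n) \<le> fact n * M" by (simp add: norm_mult)
  then show ?thesis by simp
qed

lemma cheb_coeff_bound:
  assumes q: "q = (\<Sum>j\<le>m. smult (c j) (cheb j))"
    and M: "\<And>t. -1 \<le> t \<Longrightarrow> t \<le> 1 \<Longrightarrow> \<bar>poly q t\<bar> \<le> M"
    and j: "j \<le> m"
  shows "\<bar>c j\<bar> \<le> 2 * M"
proof -
  define P :: "complex poly" where "P = (\<Sum>l\<le>m. smult (of_real (c l) / 2) (monom 1 (m + l) + monom 1 (m - l)))"
  have M0: "0 \<le> M" using M[of 0] by simp
  have polyP: "poly P w = w ^ m * of_real (poly q (Re w))" if w: "norm w = 1" for w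
  proof -
    have u: "cnj w * w = 1" using w complex_norm_square[of w] by (simp add: mult.commute)
    have pw: "w ^ (m - l) = w ^ m * cnj w ^ l" if "l \<le> m" for l
    proof -
      have "w ^ m * cnj w ^ l = w ^ (m - l) * (w ^ l * cnj w ^ l)"
        using that by (simp add: power_add[symmetric] mult.assoc)
      also have "w ^ l * cnj w ^ l = 1" using u by (metis power_mult_distrib power_one mult.commute)
      finally show ?thesis by simp
    qed
    have "poly P w = (\<Sum>l\<le>m. of_real (c l) / 2 * (w ^ (m + l) + w ^ (m - l)))"
      by (simp add: P_def poly_sum poly_monom)
    also have "\<dots> = (\<Sum>l\<le>m. w ^ m * (of_real (c l) * of_real (Re (w ^ l))))"
    proof (rule sum.cong)
      fix l assume "l \<in> {..m}"
      then have P1: "w ^ (m - l) = w ^ m * cnj w ^ l" using pw by simp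
      have R: "of_real (Re (w ^ l)) = (w ^ l + cnj w ^ l) / 2"
        using complex_add_cnj[of "w ^ l"] by simp
      show "of_real (c l) / 2 * (w ^ (m + l) + w ^ (m - l)) = w ^ m * (of_real (c l) * of_real (Re (w ^ l)))"
        unfolding R P1 by (simp add: power_add field_simps)
    qed simp
    also have "\<dots> = w ^ m * of_real (\<Sum>l\<le>m. c l * poly (cheb l) (Re w))"
      by (simp add: sum_distrib_left cheb_circle[OF w])
    also have "(\<Sum>l\<le>m. c l * poly (cheb l) (Re w)) = poly q (Re w)"
      by (simp add: q poly_sum)
    finally show ?thesis .
  qed
  have bound: "norm (poly P w) \<le> M" if w: "norm w = 1" for w
  proof -
    have "\<bar>Re w\<bar> \<le> 1" using abs_Re_le_cmod[of w] w by simp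
    then have "\<bar>poly q (Re w)\<bar> \<le> M" using M by auto
    then show ?thesis using w by (simp add: polyP norm_mult norm_power)
  qed
  have cf: "coeff P (m + j) = (if j = 0 then of_real (c 0) else of_real (c j) / 2)"
  proof -
    have "coeff P (m + j) = (\<Sum>l\<le>m. of_real (c l) / 2 * ((if l = j then 1 else 0) + (if l = 0 \<and> j = 0 then 1 else 0)))"
      unfolding P_def coeff_sum
      by (rule sum.cong) (use j in auto)
    also have "\<dots> = (\<Sum>l\<le>m. (if l = j then of_real (c l) / 2 else 0)) + (\<Sum>l\<le>m. (if l = 0 \<and> j = 0 then of_real (c l) / 2 else 0))"
      by (simp only: sum.distrib[symmetric]) (rule sum.cong, auto)
    also have "\<dots> = of_real (c j) / 2 + (if j = 0 then of_real (c 0) / 2 else 0)"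
      using j by (simp add: sum.delta)
    finally show ?thesis by auto
  qed
  have "norm (coeff P (m + j)) \<le> M" by (rule coeff_bound_complex[OF bound])
  then show ?thesis using M0 cf by (auto split: if_splits simp: norm_divide)
qed


lemma ev_sum: "ev k (\<Sum>j\<in>S. f j) c = (\<Sum>j\<in>S. ev k (f j) c)"
  by (induction S rule: infinite_finite_induct) (auto simp: ev_add)

lemma exp_beats:
  fixes \<rho> C :: real
  assumes "\<rho> > 1" "C \<ge> 0"
  shows "\<exists>n. C * 2^n < \<rho>^(2^n)"
proof -
  have pos: "(\<rho> - 1)^2 > 0" using assms by simp
  obtain n where n: "2 * C / (\<rho> - 1)^2 < 2^n"
    using real_arch_pow[of 2 "2 * C / (\<rho> - 1)^2"] by auto
  have n2: "2 * C < (\<rho> - 1)^2 * 2^n" using n pos by (simp add: field_simps)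
  have b: "1 + real (2^n) * (\<rho> - 1) \<le> (1 + (\<rho> - 1))^(2^n)"
    by (rule Bernoulli_inequality) (use assms in simp)
  then have b2: "2^n * (\<rho> - 1) \<le> \<rho>^(2^n)" by simp
  have "(2^n * (\<rho> - 1))^2 \<le> (\<rho>^(2^n))^2"
    by (rule power_mono[OF b2]) (use assms in simp)
  also have "\<dots> = \<rho>^(2^Suc n)" by (simp add: power_mult[symmetric] mult.commute)
  finally have c: "2^n * 2^n * (\<rho> - 1)^2 \<le> \<rho>^(2^Suc n)" by (simp add: power2_eq_square algebra_simps)
  have "C * 2^Suc n = 2^n * (2 * C)" by simp
  also have "\<dots> < 2^n * ((\<rho> - 1)^2 * 2^n)" using n2 by simp
  also have "\<dots> \<le> \<rho>^(2^Suc n)" using c by (simp add: algebra_simps)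
  finally show ?thesis by blast
qed

context cstar_k
begin

lemma normB0:
  assumes "degree q \<le> m" and M: "\<And>t. -1 \<le> t \<Longrightarrow> t \<le> 1 \<Longrightarrow> \<bar>poly q t\<bar> \<le> M"
  shows "norm (ev k q c) \<le> 2 * real (Suc m) * M * norm c"
proof -
  obtain cf where q: "q = (\<Sum>j\<le>m. smult (cf j) (cheb j))" using cheb_expansion[OF assms(1)] by blast
  have "ev k q c = (\<Sum>j\<le>m. cf j *\<^sub>R ev k (cheb j) c)"
    by (subst q) (simp add: ev_sum ev_smult)
  then have "norm (ev k q c) \<le> (\<Sum>j\<le>m. norm (cf j *\<^sub>R ev k (cheb j) c))"
    by (simp only:) (rule norm_sum)
  also have "\<dots> \<le> (\<Sum>j\<le>m. 2 * M * norm c)"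
  proof (rule sum_mono)
    fix j assume "j \<in> {..m}"
    then have "\<bar>cf j\<bar> \<le> 2 * M" using cheb_coeff_bound[OF q M] by auto
    then show "norm (cf j *\<^sub>R ev k (cheb j) c) \<le> 2 * M * norm c"
      using norm_ev_cheb[of j c] by (simp add: mult_mono')
  qed
  also have "\<dots> = 2 * real (Suc m) * M * norm c" by simp
  finally show ?thesis .
qed

lemma normB1:
  assumes "degree p \<le> m" and M: "\<And>t. -1 \<le> t \<Longrightarrow> t \<le> 1 \<Longrightarrow> \<bar>poly (pCons 0 p) t\<bar> \<le> M"
  shows "norm (ev k p k) \<le> 2 * real (Suc (Suc m)) * M"
proof -
  let ?a = "ev k p k"
  have M0: "0 \<le> M" using M[of 0] by simp
  have dg: "degree (pCons 0 p) \<le> Suc m" using assms(1) by (simp add: degree_pCons_le order_trans[OF degree_pCons_le])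
  have "(norm ?a)\<^sup>2 = norm (?a * star ?a)" by (simp add: cstar_id2)
  also have "?a * star ?a = ev k (pCons 0 p) (star ?a)" by (simp add: ev_pCons0)
  also have "norm \<dots> \<le> 2 * real (Suc (Suc m)) * M * norm (star ?a)"
    by (rule normB0[OF dg M])
  finally have "(norm ?a)\<^sup>2 \<le> 2 * real (Suc (Suc m)) * M * norm ?a" by simp
  then show ?thesis using M0
    by (cases "norm ?a = 0") (auto simp: power2_eq_square)
qed

fun pw :: "real poly \<Rightarrow> nat \<Rightarrow> real poly" where
  "pw p 0 = p" | "pw p (Suc n) = pCons 0 (pw p n) * pw p n"

lemma pw_pCons: "pCons 0 (pw p n) = (pCons 0 p) ^ (2^n)"
proof (induction n)
  case (Suc n)
  have "pCons 0 (pw p (Suc n)) = pCons 0 (pw p n) * pCons 0 (pw p n)" by simp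
  also have "\<dots> = (pCons 0 p) ^ (2^Suc n)" using Suc by (simp add: power_mult[symmetric] power2_eq_square[symmetric] mult.commute)
  finally show ?case .
qed simp

lemma pw_ev: "ev k (pw p (Suc n)) k = ev k (pw p n) k * ev k (pw p n) k"
  by (simp only: pw.simps ev_mult ev_pCons0)

lemma pw_star: "star (ev k (pw p n) k) = ev k (pw p n) k"
  by (rule star_ev[OF sa])

lemma pw_norm: "norm (ev k (pw p n) k) = norm (ev k p k) ^ (2^n)"
proof (induction n)
  case (Suc n)
  have "norm (ev k (pw p (Suc n)) k) = norm (star (ev k (pw p n) k) * ev k (pw p n) k)"
    by (simp only: pw_ev pw_star)
  also have "\<dots> = (norm (ev k (pw p n) k))\<^sup>2" by (rule cstar_id)
  finally have "norm (ev k (pw p (Suc n)) k) = (norm (ev k (pw p n) k))\<^sup>2" .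
  then show ?case using Suc by (simp add: power_mult[symmetric] mult.commute)
qed simp

lemma normB:
  assumes M: "\<And>t. -1 \<le> t \<Longrightarrow> t \<le> 1 \<Longrightarrow> \<bar>poly (pCons 0 p) t\<bar> \<le> M"
  shows "norm (ev k p k) \<le> M"
proof (rule ccontr)
  assume "\<not> ?thesis"
  then have gt: "norm (ev k p k) > M" by simp
  have M0: "0 \<le> M" using M[of 0] by simp
  define D where "D = degree (pCons 0 p)"
  have bnd: "norm (ev k p k) ^ (2^n) \<le> 6 * real (Suc D) * 2^n * M^(2^n)" for n
  proof -
    have dg: "degree (pw p n) \<le> 2^n * D"
    proof -
      have "degree (pw p n) \<le> degree (pCons 0 (pw p n))" by (simp add: degree_pCons_eq_if)
      also have "\<dots> \<le> 2^n * D" unfolding pw_pCons D_def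
        using degree_power_le[of "pCons 0 p" "2^n"] by (simp add: mult.commute)
      finally show ?thesis .
    qed
    have Mn: "\<bar>poly (pCons 0 (pw p n)) t\<bar> \<le> M^(2^n)" if "-1 \<le> t" "t \<le> 1" for t
      unfolding pw_pCons poly_power power_abs
      by (rule power_mono[OF M[OF that]]) simp
    have "norm (ev k (pw p n) k) \<le> 2 * real (Suc (Suc (2^n * D))) * M^(2^n)"
      by (rule normB1[OF dg Mn])
    also have "\<dots> \<le> 6 * real (Suc D) * 2^n * M^(2^n)"
    proof (rule mult_right_mono)
      have "real (Suc (Suc (2^n * D))) \<le> 3 * real (Suc D) * 2^n"
      proof -
        have "(1::real) \<le> 2^n" by simp
        then have "real (Suc (Suc (2^n * D))) = 2 + 2^n * real D" by simp
        also have "\<dots> \<le> 3 * real (Suc D) * 2^n"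
        proof -
          have h1: "(2::real) \<le> 3 * 2^n" using \<open>(1::real) \<le> 2^n\<close> by linarith
          have h2: "0 \<le> real D * (2 * 2^n)" by simp
          show ?thesis by (simp add: algebra_simps) (use h1 h2 in linarith)
        qed
        finally show ?thesis .
      qed
      then have "2 * real (Suc (Suc (2^n * D))) \<le> 2 * (3 * real (Suc D) * 2^n)" by (rule mult_left_mono) simp
      then show "2 * real (Suc (Suc (2^n * D))) \<le> 6 * real (Suc D) * 2^n" by (simp add: algebra_simps)
    qed (use M0 in simp)
    finally show ?thesis by (simp add: pw_norm)
  qed
  show False
  proof (cases "M = 0")
    case True
    then show False using bnd[of 0] gt by simp
  next
    case False
    then have Mp: "M > 0" using M0 by simp
    define \<rho> where "\<rho> = norm (ev k p k) / M"
    have r1: "\<rho> > 1" using gt Mp by (simp add: \<rho>_def)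
    obtain n where n: "6 * real (Suc D) * 2^n < \<rho>^(2^n)" using exp_beats[OF r1, of "6 * real (Suc D)"] by auto
    have "norm (ev k p k) ^ (2^n) = \<rho>^(2^n) * M^(2^n)" using Mp by (simp add: \<rho>_def power_divide)
    then have "\<rho>^(2^n) * M^(2^n) \<le> 6 * real (Suc D) * 2^n * M^(2^n)" using bnd[of n] by simp
    then have "\<rho>^(2^n) \<le> 6 * real (Suc D) * 2^n" using Mp by simp
    then show False using n by simp
  qed
qed

end

lemma rpf_poly: "real_polynomial_function (f :: real \<Rightarrow> real) \<Longrightarrow> \<exists>p. f = poly p"
proof (induction rule: real_polynomial_function.induct)
  case (linear f)
  then have "f = (\<lambda>x. f 1 * x)"
  proof (intro ext)
    fix x :: real
    have "f (x * 1) = x * f 1" by (rule linear_scale_real[OF bounded_linear.linear[OF linear]])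
    then show "f x = f 1 * x" by simp
  qed
  then have fx: "f x = f 1 * x" for x by (metis (no_types))
  have "f = poly [:0, f 1:]"
  proof (rule ext)
    fix x show "f x = poly [:0, f 1:] x" using fx[of x] by (simp add: mult.commute)
  qed
  then show ?case by blast
next
  case (const c)
  have "(\<lambda>x. c) = poly [:c:]" by auto
  then show ?case by blast
next
  case (add f g)
  then obtain p q where "f = poly p" "g = poly q" by blast
  then have "(\<lambda>x. f x + g x) = poly (p + q)" by auto
  then show ?case by blast
next
  case (mult f g)
  then obtain p q where "f = poly p" "g = poly q" by blast
  then have "(\<lambda>x. f x * g x) = poly (p * q)" by auto
  then show ?case by blast
qed

lemma weier_poly:
  assumes "continuous_on {-1..1} (f :: real \<Rightarrow> real)" "e > 0"
  shows "\<exists>p. \<forall>t\<in>{-1..1}. \<bar>f t - poly p t\<bar> < e"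
proof -
  obtain g where g: "polynomial_function g" "\<forall>x\<in>{-1..1}. norm (f x - g x) < e"
    using Stone_Weierstrass_polynomial_function[OF compact_Icc assms(1) assms(2)] by blast
  obtain p where "g = poly p" using rpf_poly g(1) real_polynomial_function_eq by blast
  then show ?thesis using g(2) by auto
qed

lemma weier_poly0:
  assumes "continuous_on {-1..1} (f :: real \<Rightarrow> real)" "e > 0" "f 0 = 0"
  shows "\<exists>p. \<forall>t\<in>{-1..1}. \<bar>f t - poly (pCons 0 p) t\<bar> \<le> e"
proof -
  obtain p0 where p0: "\<forall>t\<in>{-1..1}. \<bar>f t - poly p0 t\<bar> < e/2"
    using weier_poly[OF assms(1), of "e/2"] assms(2) by auto
  define q where "q = p0 - [:poly p0 0:]"
  have c0: "coeff q 0 = 0" by (simp add: q_def poly_0_coeff_0)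
  obtain a p where qa: "q = pCons a p" by (cases q) auto
  have "a = 0" using c0 qa by simp
  then have qp: "q = pCons 0 p" using qa by simp
  have z: "\<bar>poly p0 0\<bar> < e/2" using p0[rule_format, of 0] assms(3) by simp
  have "\<bar>f t - poly (pCons 0 p) t\<bar> \<le> e" if "t \<in> {-1..1}" for t
  proof -
    have "poly (pCons 0 p) t = poly p0 t - poly p0 0" using qp by (simp add: q_def[symmetric] flip: qp) (simp add: q_def)
    then show ?thesis using p0[rule_format, OF that] z by linarith
  qed
  then show ?thesis by blast
qed

definition Fc :: "real \<Rightarrow> real" where "Fc t = min 1 (max 0 (8 * \<bar>t\<bar> - 1))"
definition Gc :: "real \<Rightarrow> real" where "Gc t = t / max (t^2) (1/64)"

lemma Fc_cont: "continuous_on S Fc"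
  unfolding Fc_def by (intro continuous_intros)

lemma Gc_cont: "continuous_on S Gc"
  unfolding Gc_def by (intro continuous_intros) (auto simp: max_def)

lemma Fc0: "Fc 0 = 0" by (simp add: Fc_def)
lemma Gc0: "Gc 0 = 0" by (simp add: Gc_def)
lemma Fc_range: "0 \<le> Fc t" "Fc t \<le> 1" by (auto simp: Fc_def)

lemma GtF: "Gc t * t * Fc t = Fc t"
proof (cases "\<bar>t\<bar> \<le> 1/8")
  case True then have "Fc t = 0" by (simp add: Fc_def)
  then show ?thesis by simp
next
  case False
  then have "(1/8::real)^2 < \<bar>t\<bar>^2" by (intro power_strict_mono) auto
  then have "t^2 > 1/64" by (simp add: power2_eq_square)
  then have "Gc t = t / t^2" by (simp add: Gc_def max_def)
  then have "Gc t * t = 1" using False by (auto simp: power2_eq_square)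
  then show ?thesis by simp
qed

lemma Gc_bound: "\<bar>Gc t\<bar> \<le> 8"
proof (cases "t^2 \<ge> 1/64")
  case True
  have ge: "\<bar>t\<bar> \<ge> 1/8"
  proof (rule ccontr)
    assume "\<not> \<bar>t\<bar> \<ge> 1/8"
    then have "\<bar>t\<bar>^2 < (1/8::real)^2" by (intro power_strict_mono) auto
    then show False using True by (simp add: power2_eq_square)
  qed
  have sq: "t^2 = \<bar>t\<bar> * \<bar>t\<bar>" by (metis abs_mult_self_eq power2_eq_square)
  have "1 * \<bar>t\<bar> \<le> (8 * \<bar>t\<bar>) * \<bar>t\<bar>" by (rule mult_right_mono) (use ge in auto)
  then have le: "\<bar>t\<bar> \<le> 8 * t^2" by (simp add: sq mult.assoc)
  have pos: "t^2 > 0" using ge by simp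
  have "\<bar>Gc t\<bar> = \<bar>t\<bar> / t^2" using True by (simp add: Gc_def max_def)
  also have "\<dots> \<le> 8" using le pos by (simp add: divide_le_eq)
  finally show ?thesis .
next
  case False
  have "\<bar>t\<bar> < 1/8"
  proof (rule ccontr)
    assume "\<not> \<bar>t\<bar> < 1/8"
    then have "(1/8::real)^2 \<le> \<bar>t\<bar>^2" by (intro power_mono) auto
    then show False using False by (simp add: power2_eq_square)
  qed
  moreover have "\<bar>Gc t\<bar> = \<bar>t\<bar> * 64" using False by (simp add: Gc_def max_def)
  ultimately show ?thesis by simp
qed

lemma tF_bound: "\<bar>t * (1 - Fc t)\<bar> \<le> 1/4"
proof (cases "\<bar>t\<bar> \<ge> 1/4")
  case True then have "Fc t = 1" by (simp add: Fc_def)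
  then show ?thesis by simp
next
  case False
  have "\<bar>1 - Fc t\<bar> \<le> 1" using Fc_range[of t] by simp
  then have "\<bar>t\<bar> * \<bar>1 - Fc t\<bar> \<le> 1/4 * 1" using False by (intro mult_mono) auto
  then show ?thesis by (simp add: abs_mult)
qed


lemma ineq11:
  fixes t G Gn F Fn e :: real
  assumes t: "\<bar>t\<bar> \<le> 1" and g: "\<bar>G - Gn\<bar> \<le> e" and f: "\<bar>F - Fn\<bar> \<le> e"
    and F: "0 \<le> F" "F \<le> 1" and G: "\<bar>G\<bar> \<le> 8" and e: "e \<le> 1" and GtF: "G * t * F = F"
  shows "\<bar>t * (Gn * Fn) - Fn\<bar> \<le> 11 * e"
proof -
  have e0: "0 \<le> e" using f by linarith
  have Fn: "\<bar>Fn\<bar> \<le> 2" using f F e by linarith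
  have eq: "t * (Gn * Fn) - Fn = t * ((Gn - G) * Fn + G * (Fn - F)) + (F - Fn)"
    using GtF by (simp add: algebra_simps)
  have "\<bar>t * (Gn * Fn) - Fn\<bar> \<le> \<bar>t\<bar> * (\<bar>Gn - G\<bar> * \<bar>Fn\<bar> + \<bar>G\<bar> * \<bar>Fn - F\<bar>) + \<bar>F - Fn\<bar>"
  proof -
    have X: "\<bar>(Gn - G) * Fn + G * (Fn - F)\<bar> \<le> \<bar>Gn - G\<bar> * \<bar>Fn\<bar> + \<bar>G\<bar> * \<bar>Fn - F\<bar>"
      using abs_triangle_ineq[of "(Gn - G) * Fn" "G * (Fn - F)"] by (simp add: abs_mult)
    have "\<bar>t * ((Gn - G) * Fn + G * (Fn - F)) + (F - Fn)\<bar> \<le> \<bar>t\<bar> * \<bar>(Gn - G) * Fn + G * (Fn - F)\<bar> + \<bar>F - Fn\<bar>"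
      using abs_triangle_ineq[of "t * ((Gn - G) * Fn + G * (Fn - F))" "F - Fn"] by (simp add: abs_mult)
    also have "\<dots> \<le> \<bar>t\<bar> * (\<bar>Gn - G\<bar> * \<bar>Fn\<bar> + \<bar>G\<bar> * \<bar>Fn - F\<bar>) + \<bar>F - Fn\<bar>"
      using X by (simp add: mult_left_mono)
    finally show ?thesis by (simp only: eq)
  qed
  also have "\<dots> \<le> 1 * (e * 2 + 8 * e) + e"
  proof -
    have a: "\<bar>Gn - G\<bar> * \<bar>Fn\<bar> \<le> e * 2" using g Fn e0 by (intro mult_mono) (auto simp: abs_minus_commute)
    have b: "\<bar>G\<bar> * \<bar>Fn - F\<bar> \<le> 8 * e" using G f e0 by (intro mult_mono) (auto simp: abs_minus_commute)
    have c: "\<bar>t\<bar> * (\<bar>Gn - G\<bar> * \<bar>Fn\<bar> + \<bar>G\<bar> * \<bar>Fn - F\<bar>) \<le> 1 * (e * 2 + 8 * e)"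
      using a b t e0 by (intro mult_mono) auto
    show ?thesis using c f by linarith
  qed
  finally show ?thesis by simp
qed

context cstar_k
begin

lemma approx_seq:
  assumes "continuous_on {-1..1} f" "f 0 = 0"
  shows "\<exists>p. \<forall>n. \<forall>t\<in>{-1..1}. \<bar>f t - poly (pCons 0 (p n)) t\<bar> \<le> 1 / real (Suc n)"
proof -
  have "\<forall>n. \<exists>p. \<forall>t\<in>{-1..1}. \<bar>f t - poly (pCons 0 p) t\<bar> \<le> 1 / real (Suc n)"
    using weier_poly0[OF assms(1) _ assms(2)] by simp
  then show ?thesis by (rule choice)
qed

lemma approx_conv:
  assumes p: "\<forall>n. \<forall>t\<in>{-1..1}. \<bar>f t - poly (pCons 0 (p n)) t\<bar> \<le> 1 / real (Suc n)"
  shows "convergent (\<lambda>n. ev k (p n) k)"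
proof -
  have bnd: "norm (ev k (p m) k - ev k (p n) k) \<le> 1 / real (Suc m) + 1 / real (Suc n)" for m n
  proof -
    have "ev k (p m) k - ev k (p n) k = ev k (p m - p n) k" by (simp add: ev_diff)
    also have "norm \<dots> \<le> 1 / real (Suc m) + 1 / real (Suc n)"
    proof (rule normB)
      fix t :: real assume "-1 \<le> t" "t \<le> 1"
      then have "\<bar>f t - poly (pCons 0 (p m)) t\<bar> \<le> 1 / real (Suc m)" "\<bar>f t - poly (pCons 0 (p n)) t\<bar> \<le> 1 / real (Suc n)"
        using p by auto
      moreover have "poly (pCons 0 (p m - p n)) t = poly (pCons 0 (p m)) t - poly (pCons 0 (p n)) t"
        by (simp add: algebra_simps)
      ultimately show "\<bar>poly (pCons 0 (p m - p n)) t\<bar> \<le> 1 / real (Suc m) + 1 / real (Suc n)"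
        by linarith
    qed
    finally show ?thesis .
  qed
  have "Cauchy (\<lambda>n. ev k (p n) k)"
  proof (rule CauchyI)
    fix e :: real assume "0 < e"
    then obtain M where M: "inverse (real (Suc M)) < e / 2" using reals_Archimedean[of "e/2"] by auto
    have "\<forall>m\<ge>M. \<forall>n\<ge>M. norm (ev k (p m) k - ev k (p n) k) < e"
    proof (intro allI impI)
      fix m n assume "m \<ge> M" "n \<ge> M"
      then have "1 / real (Suc m) \<le> 1 / real (Suc M)" "1 / real (Suc n) \<le> 1 / real (Suc M)"
        by (auto simp: frac_le)
      then show "norm (ev k (p m) k - ev k (p n) k) < e"
        using bnd[of m n] M by (simp add: inverse_eq_divide)
    qed
    then show "\<exists>M. \<forall>m\<ge>M. \<forall>n\<ge>M. norm (ev k (p m) k - ev k (p n) k) < e" by blast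
  qed
  then show ?thesis by (simp add: Cauchy_convergent_iff)
qed

lemma spec:
  assumes nk1: "norm k = 1/2"
  shows "\<exists>e g. e \<noteq> 0 \<and> g * (k * e) = e"
proof -
  obtain p where p: "\<forall>n. \<forall>t\<in>{-1..1}. \<bar>Fc t - poly (pCons 0 (p n)) t\<bar> \<le> 1 / real (Suc n)"
    using approx_seq[OF Fc_cont Fc0] by blast
  obtain q where q: "\<forall>n. \<forall>t\<in>{-1..1}. \<bar>Gc t - poly (pCons 0 (q n)) t\<bar> \<le> 1 / real (Suc n)"
    using approx_seq[OF Gc_cont Gc0] by blast
  define X where "X n = ev k (p n) k" for n
  define Y where "Y n = ev k (q n) k" for n
  obtain e where e: "X \<longlonglongrightarrow> e" using approx_conv[OF p] unfolding X_def convergent_def by blast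
  obtain g where g: "Y \<longlonglongrightarrow> g" using approx_conv[OF q] unfolding Y_def convergent_def by blast
  have kX: "k * X n = ev k (pCons 0 (p n)) k" for n by (simp add: X_def ev_pCons)
  have lim0: "(\<lambda>n. Y n * (k * X n) - X n) \<longlonglongrightarrow> 0"
  proof (rule Lim_null_comparison)
    show "(\<lambda>n. 11 * inverse (real (Suc n))) \<longlonglongrightarrow> 0"
      using tendsto_mult_right_zero[OF LIMSEQ_inverse_real_of_nat, of 11] by simp
    show "\<forall>\<^sub>F n in sequentially. norm (Y n * (k * X n) - X n) \<le> 11 * inverse (real (Suc n))"
    proof (rule always_eventually, rule allI)
      fix n
      have "Y n * (k * X n) = ev k (pCons 0 (q n)) (ev k (pCons 0 (p n)) k)"
        by (simp only: kX Y_def ev_pCons0)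
      also have "\<dots> = ev k (pCons 0 (q n) * pCons 0 (p n)) k" by (simp only: ev_mult)
      finally have "Y n * (k * X n) - X n = ev k (pCons 0 (q n) * pCons 0 (p n) - p n) k"
        by (simp add: X_def ev_diff)
      also have "norm \<dots> \<le> 11 * inverse (real (Suc n))"
      proof (rule normB)
        fix t :: real assume t: "-1 \<le> t" "t \<le> 1"
        let ?Fn = "poly (pCons 0 (p n)) t" and ?Gn = "poly (pCons 0 (q n)) t"
        have "poly (pCons 0 (pCons 0 (q n) * pCons 0 (p n) - p n)) t = t * (?Gn * ?Fn) - ?Fn"
          by (simp add: algebra_simps)
        moreover have "\<bar>t * (?Gn * ?Fn) - ?Fn\<bar> \<le> 11 * (1 / real (Suc n))"
          by (rule ineq11[where G="Gc t" and F="Fc t"]) (use t p q Fc_range Gc_bound GtF in auto)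
        ultimately show "\<bar>poly (pCons 0 (pCons 0 (q n) * pCons 0 (p n) - p n)) t\<bar> \<le> 11 * inverse (real (Suc n))"
          by (simp add: inverse_eq_divide)
      qed
      finally show "norm (Y n * (k * X n) - X n) \<le> 11 * inverse (real (Suc n))" .
    qed
  qed
  have limg: "(\<lambda>n. Y n * (k * X n) - X n) \<longlonglongrightarrow> g * (k * e) - e"
    by (intro tendsto_intros g e)
  have ge: "g * (k * e) = e" using LIMSEQ_unique[OF limg lim0] by simp
  have enz: "e \<noteq> 0"
  proof
    assume e0: "e = 0"
    have lim1: "(\<lambda>n. norm (k - k * X n)) \<longlonglongrightarrow> norm (k - k * e)"
      by (intro tendsto_intros e)
    have lim2: "(\<lambda>n. 1/4 + inverse (real (Suc n))) \<longlonglongrightarrow> 1/4 + 0"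
      by (intro tendsto_intros LIMSEQ_inverse_real_of_nat)
    have "norm (k - k * X n) \<le> 1/4 + inverse (real (Suc n))" for n
    proof -
      have "k - k * X n = ev k (1 - pCons 0 (p n)) k" by (simp add: kX ev_diff)
      also have "norm \<dots> \<le> 1/4 + inverse (real (Suc n))"
      proof (rule normB)
        fix t :: real assume t: "-1 \<le> t" "t \<le> 1"
        let ?Fn = "poly (pCons 0 (p n)) t"
        have "poly (pCons 0 (1 - pCons 0 (p n))) t = t * (1 - ?Fn)" by simp
        moreover have "\<bar>t * (1 - ?Fn)\<bar> \<le> 1/4 + inverse (real (Suc n))"
        proof -
          have "\<bar>Fc t - ?Fn\<bar> \<le> 1 / real (Suc n)" using p t by auto
          then have "\<bar>t\<bar> * \<bar>Fc t - ?Fn\<bar> \<le> 1 * (1 / real (Suc n))" using t by (intro mult_mono) auto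
          moreover have "t * (1 - ?Fn) = t * (1 - Fc t) + t * (Fc t - ?Fn)" by (simp add: algebra_simps)
          moreover have "\<bar>t * (1 - Fc t)\<bar> \<le> 1/4" by (rule tF_bound)
          moreover have "\<bar>t * (1 - Fc t) + t * (Fc t - ?Fn)\<bar> \<le> \<bar>t * (1 - Fc t)\<bar> + \<bar>t\<bar> * \<bar>Fc t - ?Fn\<bar>"
            using abs_triangle_ineq[of "t * (1 - Fc t)" "t * (Fc t - ?Fn)"] by (simp add: abs_mult)
          ultimately show ?thesis by (simp add: inverse_eq_divide)
        qed
        ultimately show "\<bar>poly (pCons 0 (1 - pCons 0 (p n))) t\<bar> \<le> 1/4 + inverse (real (Suc n))" by simp
      qed
      finally show ?thesis .
    qed
    then have "norm (k - k * e) \<le> 1/4 + 0"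
      by (intro LIMSEQ_le[OF lim1 lim2]) auto
    then show False using e0 nk1 by simp
  qed
  show ?thesis using ge enz by blast
qed

end

context cstar
begin

lemma spec_general:
  assumes sa: "star h = h" and hnz: "h \<noteq> 0"
  shows "\<exists>e g. e \<noteq> 0 \<and> g * (h * e) = e"
proof -
  define r where "r = 1 / (2 * norm h)"
  have rpos: "r > 0" using hnz by (simp add: r_def)
  define k where "k = r *\<^sub>R h"
  have ks: "star k = k" by (simp add: k_def star_scaleR sa)
  have kn: "norm k = 1/2" using hnz by (simp add: k_def r_def)
  interpret K: cstar_k scA star k
    by unfold_locales (auto simp: ks kn)
  obtain e g where eg: "e \<noteq> 0" "g * (k * e) = e" using K.spec[OF kn] by blast
  have "(r *\<^sub>R g) * (h * e) = g * (k * e)" by (simp add: k_def)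
  then show ?thesis using eg by metis
qed

end

context
  fixes scA :: "complex \<Rightarrow> 'a::{real_normed_algebra,banach} \<Rightarrow> 'a"
    and star :: "'a \<Rightarrow> 'a"
    and scM :: "complex \<Rightarrow> 'm::banach \<Rightarrow> 'm"
    and act :: "'m \<Rightarrow> 'a \<Rightarrow> 'm"
    and ip :: "'m \<Rightarrow> 'm \<Rightarrow> 'a"
  assumes CA: "cstar_algebra scA star"
    and HM: "hilbert_module scA star scM act ip"
begin

interpretation C: cstar scA star by unfold_locales (rule CA)

lemma act_add2: "act x (a + b) = act x a + act x b"
  using HM unfolding hilbert_module_def by metis
lemma act_mult: "act x (a * b) = act (act x a) b"
  using HM unfolding hilbert_module_def by metis
lemma scM_act: "scM c (act x a) = act x (scA c a)"
  using HM unfolding hilbert_module_def by metis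
lemma ip_act: "ip x (act y a) = ip x y * a"
  using HM unfolding hilbert_module_def by metis
lemma ip_star: "star (ip x y) = ip y x"
  using HM unfolding hilbert_module_def by metis
lemma ip_pos: "cstar_positive star (ip x x)"
  using HM unfolding hilbert_module_def by metis
lemma ip_def0: "ip x x = 0 \<Longrightarrow> x = 0"
  using HM unfolding hilbert_module_def by metis
lemma norm_M: "norm x = sqrt (norm (ip x x))"
  using HM unfolding hilbert_module_def by metis

lemma act_zero: "act x 0 = 0"
  using act_add2[of x 0 0] by simp

lemma act_diff: "act x (a - b) = act x a - act x b"
  using act_add2[of x "a - b" b] by (simp add: algebra_simps)

lemma ip_act_left: "ip (act x a) y = star a * ip x y"
proof -
  have "ip (act x a) y = star (ip y (act x a))" by (simp add: ip_star)
  also have "\<dots> = star (ip y x * a)" by (simp add: ip_act)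
  also have "\<dots> = star a * ip x y" by (simp add: C.star_mult ip_star)
  finally show ?thesis .
qed

lemma norm_act:
  assumes b: "ip x x = star b * b"
  shows "norm (act x a) = norm (b * a)"
proof -
  have "ip (act x a) (act x a) = star a * (ip x x * a)" by (simp add: ip_act_left ip_act mult.assoc)
  also have "\<dots> = star (b * a) * (b * a)" by (simp add: b C.star_mult mult.assoc)
  finally have "norm (ip (act x a) (act x a)) = (norm (b * a))\<^sup>2" by (simp add: C.cstar_id)
  then show ?thesis by (simp add: norm_M)
qed

lemma main_step:
  assumes TE: "topologically_essential scM act N"
    and K: "submodule scM act K" and x: "x \<in> K" "x \<noteq> 0"
  shows "N \<inter> K \<noteq> {0}"
proof -
  obtain b where b: "ip x x = star b * b" using ip_pos[of x] unfolding cstar_positive_def by blast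
  define h where "h = star b * b"
  have hs: "star h = h" by (simp add: h_def C.star_mult)
  have hnz: "h \<noteq> 0" using ip_def0[of x] x(2) b by (auto simp: h_def)
  obtain e g where eg: "e \<noteq> 0" "g * (h * e) = e" using C.spec_general[OF hs hnz] by blast
  define D where "D = {w. g * (h * w) = w}"
  define L where "L = (\<lambda>w. act x w) ` D"
  have nb: "norm (act x a) = norm (b * a)" for a by (rule norm_act[OF b])
  define Cc where "Cc = norm g * norm b"
  have wbound: "norm w \<le> Cc * norm (act x w)" if "w \<in> D" for w
  proof -
    have "w = g * (star b * (b * w))" using that by (simp add: D_def h_def mult.assoc)
    then have "norm w = norm (g * (star b * (b * w)))" by simp
    also have "\<dots> \<le> norm g * (norm (star b) * norm (b * w))"
    proof -
      have "norm (star b * (b * w)) \<le> norm (star b) * norm (b * w)" by (rule norm_mult_ineq)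
      then have "norm g * norm (star b * (b * w)) \<le> norm g * (norm (star b) * norm (b * w))"
        by (rule mult_left_mono) simp
      then show ?thesis using norm_mult_ineq[of g "star b * (b * w)"] by linarith
    qed
    also have "\<dots> = Cc * norm (act x w)" by (simp add: Cc_def nb)
    finally show ?thesis .
  qed
  have Dsub: "w1 - w2 \<in> D" if "w1 \<in> D" "w2 \<in> D" for w1 w2
    using that by (simp add: D_def algebra_simps)
  have L_sub: "submodule scM act L"
    unfolding submodule_def
  proof (intro conjI ballI allI)
    show "0 \<in> L" unfolding L_def D_def by (rule image_eqI[where x=0]) (auto simp: act_zero)
  next
    fix y z assume "y \<in> L" "z \<in> L"
    then obtain w1 w2 where "w1 \<in> D" "w2 \<in> D" "y = act x w1" "z = act x w2" by (auto simp: L_def)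
    then show "y + z \<in> L" unfolding L_def
      by (intro image_eqI[where x="w1 + w2"]) (auto simp: D_def act_add2 distrib_left)
  next
    fix c y assume "y \<in> L"
    then obtain w where w: "w \<in> D" "y = act x w" by (auto simp: L_def)
    have "g * (h * scA c w) = scA c w"
      using w(1) by (simp add: D_def C.scA_right[symmetric])
    then show "scM c y \<in> L" unfolding L_def using w
      by (intro image_eqI[where x="scA c w"]) (auto simp: D_def scM_act)
  next
    fix y a assume "y \<in> L"
    then obtain w where w: "w \<in> D" "y = act x w" by (auto simp: L_def)
    have "g * (h * (w * a)) = w * a" using w(1) by (simp add: D_def mult.assoc[symmetric])
    then show "act y a \<in> L" unfolding L_def using w
      by (intro image_eqI[where x="w * a"]) (auto simp: D_def act_mult)
  qed
  have L_closed: "closed L"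
    unfolding closed_sequential_limits
  proof (intro allI impI, elim conjE)
    fix s l assume sL: "\<forall>n. s n \<in> L" and sl: "s \<longlonglongrightarrow> l"
    obtain w where w: "\<And>n. w n \<in> D" "\<And>n. s n = act x (w n)"
    proof -
      have "\<forall>n. \<exists>v. v \<in> D \<and> s n = act x v" using sL unfolding L_def by blast
      then obtain w where "\<forall>n. w n \<in> D \<and> s n = act x (w n)" by metis
      then show ?thesis using that by blast
    qed
    have Cs: "Cauchy s" using sl by (rule LIMSEQ_imp_Cauchy)
    have Cc0: "Cc \<ge> 0" by (simp add: Cc_def)
    have "Cauchy w"
    proof (rule CauchyI)
      fix eps :: real assume ep: "0 < eps"
      then have "0 < eps / (Cc + 1)" using Cc0 by simp
      then obtain M where M: "\<forall>m\<ge>M. \<forall>n\<ge>M. norm (s m - s n) < eps / (Cc + 1)"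
        using Cs unfolding Cauchy_iff by blast
      have "\<forall>m\<ge>M. \<forall>n\<ge>M. norm (w m - w n) < eps"
      proof (intro allI impI)
        fix m n assume "m \<ge> M" "n \<ge> M"
        then have sm: "norm (s m - s n) < eps / (Cc + 1)" using M by blast
        have "norm (w m - w n) \<le> Cc * norm (act x (w m - w n))"
          by (rule wbound[OF Dsub[OF w(1) w(1)]])
        also have "\<dots> = Cc * norm (s m - s n)" by (simp add: w(2) act_diff)
        also have "\<dots> \<le> Cc * (eps / (Cc + 1))" using sm Cc0 by (intro mult_left_mono) auto
        also have "\<dots> < eps"
        proof -
          have "Cc * (eps / (Cc + 1)) = eps * (Cc / (Cc + 1))" by simp
          also have "\<dots> < eps * 1" using ep Cc0 by (intro mult_strict_left_mono) auto
          finally show ?thesis by simp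
        qed
        finally show "norm (w m - w n) < eps" .
      qed
      then show "\<exists>M. \<forall>m\<ge>M. \<forall>n\<ge>M. norm (w m - w n) < eps" by blast
    qed
    then obtain w0 where w0: "w \<longlonglongrightarrow> w0" using Cauchy_convergent_iff convergent_def by blast
    have "(\<lambda>n. g * (h * w n)) \<longlonglongrightarrow> g * (h * w0)" by (intro tendsto_intros w0)
    moreover have "(\<lambda>n. g * (h * w n)) = w" using w(1) by (auto simp: D_def)
    ultimately have "g * (h * w0) = w0" using w0 LIMSEQ_unique by metis
    then have w0D: "w0 \<in> D" by (simp add: D_def)
    have "(\<lambda>n. s n - act x w0) \<longlonglongrightarrow> 0"
    proof (rule Lim_null_comparison)
      show "\<forall>\<^sub>F n in sequentially. norm (s n - act x w0) \<le> norm b * norm (w n - w0)"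
        by (rule always_eventually) (simp add: w(2) act_diff[symmetric] nb norm_mult_ineq)
      have "(\<lambda>n. w n - w0) \<longlonglongrightarrow> 0" using w0 by (rule LIM_zero)
      then have "(\<lambda>n. norm (w n - w0)) \<longlonglongrightarrow> 0" by (simp add: tendsto_norm_zero)
      then show "(\<lambda>n. norm b * norm (w n - w0)) \<longlonglongrightarrow> 0" by (simp add: tendsto_mult_right_zero)
    qed
    then have "s \<longlonglongrightarrow> act x w0" by (simp add: LIM_zero_iff)
    then have "l = act x w0" using sl LIMSEQ_unique by blast
    then show "l \<in> L" using w0D by (simp add: L_def)
  qed
  have LK: "L \<subseteq> K"
    using K x(1) unfolding L_def submodule_def by auto
  have Lnz: "L \<noteq> {0}"
  proof
    assume "L = {0}"
    moreover have "act x e \<in> L" using eg(2) by (simp add: L_def D_def)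
    ultimately have "act x e = 0" by simp
    then have "b * e = 0" using nb[of e] by simp
    then have "e = 0" using eg(2) by (simp add: h_def mult.assoc)
    then show False using eg(1) by simp
  qed
  have "N \<inter> L \<noteq> {0}"
    using TE L_sub L_closed Lnz unfolding topologically_essential_def closed_submodule_def by blast
  moreover have "0 \<in> N" using TE unfolding topologically_essential_def closed_submodule_def submodule_def by blast
  moreover have "0 \<in> L" using L_sub unfolding submodule_def by blast
  ultimately obtain z where "z \<in> N" "z \<in> L" "z \<noteq> 0" by blast
  moreover have "z \<in> K" using LK \<open>z \<in> L\<close> by blast
  ultimately show ?thesis by blast
qed

end

theorem mainTheorem3:
  fixes scA :: "complex \<Rightarrow> 'a::{real_normed_algebra,banach} \<Rightarrow> 'a"
    and star :: "'a \<Rightarrow> 'a"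
    and scM :: "complex \<Rightarrow> 'm::banach \<Rightarrow> 'm"
    and act :: "'m \<Rightarrow> 'a \<Rightarrow> 'm"
    and ip :: "'m \<Rightarrow> 'm \<Rightarrow> 'a"
    and N :: "'m set"
  assumes "cstar_algebra scA star"
    and "hilbert_module scA star scM act ip"
    and "topologically_essential scM act N"
  shows "essential scM act N"
proof -
  have cN: "closed_submodule scM act N" using assms(3) unfolding topologically_essential_def by blast
  have "N \<inter> K \<noteq> {0}" if K: "submodule scM act K" "K \<noteq> {0}" for K
  proof -
    have "0 \<in> K" using K(1) unfolding submodule_def by blast
    then obtain x where "x \<in> K" "x \<noteq> 0" using K(2) by blast
    then show ?thesis using main_step[OF assms(1) assms(2) assms(3) K(1)] by blast
  qed
  then show ?thesis using cN unfolding essential_def by blast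
qed

end
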